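(* Let $n\ge 1$, let $C=(c_{i,j})$ be an $n\times n$ Bott matrix over $\mathbb{Z}_2$, and let $Y_n=Y(C)$ be the associated real Bott tower. Let $W$ be the right-angled Coxeter group with generators $s_1,\dots,s_{2n}$ and relations $s_j^2=1$ for $1\le j\le 2n$ and $(s_is_j)^2=1$ for all $1\le i<j\le 2n$ with $j\neq i+n$. For $n+1\le j\le 2n$ put $$\alpha_j:=s_j\,s_{j-n}\,s_{j-n+1}^{c_{j-n,j-n+1}}\,s_{j-n+2}^{c_{j-n,j-n+2}}\cdots s_n^{c_{j-n,n}}\in W$$ (so $\alpha_{2n}=s_{2n}s_n$). Then $\pi_1(Y_n)$, viewed as the kernel of the homomorphism $W\to\mathbb{Z}_2^n$ sending $s_i\mapsto\lambda(F_i)$, is generated by $\{\alpha_j: n+1\le j\le 2n\}$, and a complete set of defining relations for $\pi_1(Y_n)$ on these generators is $\{x_{p,q}: n+1\le p<q\le 2n\}$, where $$x_{p,q}=\begin{cases}\alpha_p\alpha_q\alpha_p^{-1}\alpha_q^{-1} & \text{if } c_{p-n,q-n}=0,\\ \alpha_p\alpha_q^{-1}\alpha_p^{-1}\alpha_q^{-1} & \text{if } c_{p-n,q-n}=1.\end{cases}$$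
   Context: A Bott matrix is an $n\times n$ matrix $C=(c_{i,j})$ with entries in $\mathbb{Z}_2=\mathbb{Z}/2\mathbb{Z}$ such that $c_{i,i}=1$ and $c_{i,j}=0$ for $i>j$. Let $I^n$ be the $n$-cube, with its $2n$ facets labelled $F_1,\dots,F_{2n}$ so that $F_j$ and $F_{n+j}$ are opposite (disjoint) facets for $1\le j\le n$. Let $e_1,\dots,e_n$ be the standard basis of $\mathbb{Z}_2^n$ and define $\lambda(F_j)=e_j$ and $\lambda(F_{n+j})=e_j+\sum_{k=j+1}^n c_{j,k}e_k$ for $1\le j\le n$. The real Bott tower $Y_n=Y(C)$ is the small cover $(\mathbb{Z}_2^n\times I^n)/\sim$, where $(t,p)\sim(t',p')$ iff $p=p'$ and $t-t'$ lies in the subgroup of $\mathbb{Z}_2^n$ spanned by $\lambda(F)$ for the facets $F$ containing $p$. Equivalently, $Y_n$ is the real toric variety of the complete smooth fan in $\mathbb{R}^n$ whose cones are spanned by subsets of $\{v_1,\dots,v_{2n}\}$ not containing both $v_i$ and $v_{n+i}$, where $v_j=e_j$ and $v_{n+j}=-e_j+\sum_{k>j}c_{j,k}e_k$. It is a closed smooth $n$-manifold obtained as an iterated $\mathbb{R}P^1$-bundle. *)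

theory Defs
  imports "HOL-Algebra.Algebra"
begin

text \<open>Words in the free group on letters of type 'a: a letter (a, True) is the
generator a, a letter (a, False) is its inverse.\<close>

type_synonym 'a fword = "('a \<times> bool) list"

text \<open>Equality in the free group modulo the normal closure of the relator set R:
the smallest congruence on words containing free cancellation and r = 1 for r in R.\<close>

inductive pres_eq :: "'a fword set \<Rightarrow> 'a fword \<Rightarrow> 'a fword \<Rightarrow> bool" for R where
  pe_refl: "pres_eq R w w"
| pe_sym: "pres_eq R u v \<Longrightarrow> pres_eq R v u"
| pe_trans: "pres_eq R u v \<Longrightarrow> pres_eq R v w \<Longrightarrow> pres_eq R u w"
| pe_cancel: "pres_eq R (xs @ [(a, b), (a, \<not> b)] @ ys) (xs @ ys)"
| pe_rel: "r \<in> R \<Longrightarrow> pres_eq R (xs @ r @ ys) (xs @ ys)"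

definition words_over :: "'a set \<Rightarrow> 'a fword set" where
  "words_over A = {w. set (map fst w) \<subseteq> A}"

definition pres_class :: "'a set \<Rightarrow> 'a fword set \<Rightarrow> 'a fword \<Rightarrow> 'a fword set" where
  "pres_class A R w = {v \<in> words_over A. pres_eq R w v}"

definition pres_mult :: "'a set \<Rightarrow> 'a fword set \<Rightarrow> 'a fword set \<Rightarrow> 'a fword set \<Rightarrow> 'a fword set" where
  "pres_mult A R U V = pres_class A R ((SOME u. u \<in> U) @ (SOME v. v \<in> V))"

definition pres_group :: "'a set \<Rightarrow> 'a fword set \<Rightarrow> 'a fword set monoid" where
  "pres_group A R =
    \<lparr>carrier = pres_class A R ` words_over A,
     monoid.mult = pres_mult A R,
     one = pres_class A R []\<rparr>"

text \<open>An n x n matrix over Z_2, indices 1..n, entries as booleans (True = 1).\<close>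

definition bott_matrix :: "nat \<Rightarrow> (nat \<Rightarrow> nat \<Rightarrow> bool) \<Rightarrow> bool" where
  "bott_matrix n C \<longleftrightarrow> (\<forall>i\<in>{1..n}. C i i) \<and> (\<forall>i j. 1 \<le> j \<and> j < i \<and> i \<le> n \<longrightarrow> \<not> C i j)"

definition cox_rels :: "nat \<Rightarrow> nat fword set" where
  "cox_rels n =
     {[(j, True), (j, True)] | j. j \<in> {1..2*n}}
   \<union> {[(i, True), (j, True), (i, True), (j, True)] | i j.
        1 \<le> i \<and> i < j \<and> j \<le> 2*n \<and> j \<noteq> i + n}"

definition cox_W :: "nat \<Rightarrow> nat fword set monoid" where
  "cox_W n = pres_group {1..2*n} (cox_rels n)"

text \<open>Z_2^n as functions nat => bool supported in {1..n}, with pointwise xor.\<close>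

definition Z2n :: "nat \<Rightarrow> (nat \<Rightarrow> bool) monoid" where
  "Z2n n = \<lparr>carrier = {f. \<forall>k. f k \<longrightarrow> k \<in> {1..n}},
            monoid.mult = (\<lambda>f g k. f k \<noteq> g k),
            one = (\<lambda>_. False)\<rparr>"

text \<open>lambda(F_j): e_j for j \<le> n, and e_{j-n} + sum_{k>j-n} c_{j-n,k} e_k for j > n.\<close>

definition lam :: "(nat \<Rightarrow> nat \<Rightarrow> bool) \<Rightarrow> nat \<Rightarrow> nat \<Rightarrow> (nat \<Rightarrow> bool)" where
  "lam C n j = (if j \<le> n then (\<lambda>k. k = j)
                else (\<lambda>k. k = j - n \<or> (j - n < k \<and> k \<le> n \<and> C (j - n) k)))"

definition phi_word :: "(nat \<Rightarrow> nat \<Rightarrow> bool) \<Rightarrow> nat \<Rightarrow> nat fword \<Rightarrow> (nat \<Rightarrow> bool)" where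
  "phi_word C n w = (\<lambda>k. odd (length (filter (\<lambda>x. lam C n (fst x) k) w)))"

definition phi :: "(nat \<Rightarrow> nat \<Rightarrow> bool) \<Rightarrow> nat \<Rightarrow> nat fword set \<Rightarrow> (nat \<Rightarrow> bool)" where
  "phi C n U = phi_word C n (SOME w. w \<in> U)"

definition alpha_word :: "(nat \<Rightarrow> nat \<Rightarrow> bool) \<Rightarrow> nat \<Rightarrow> nat \<Rightarrow> nat fword" where
  "alpha_word C n j = [(j, True), (j - n, True)] @
      map (\<lambda>k. (k, True)) (filter (\<lambda>k. C (j - n) k) [j - n + 1 ..< n + 1])"

definition x_rel :: "(nat \<Rightarrow> nat \<Rightarrow> bool) \<Rightarrow> nat \<Rightarrow> nat \<Rightarrow> nat \<Rightarrow> nat fword" where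
  "x_rel C n p q = (if C (p - n) (q - n)
      then [(p, True), (q, False), (p, False), (q, False)]
      else [(p, True), (q, True), (p, False), (q, False)])"

definition bott_rels :: "(nat \<Rightarrow> nat \<Rightarrow> bool) \<Rightarrow> nat \<Rightarrow> nat fword set" where
  "bott_rels C n = {x_rel C n p q | p q. n + 1 \<le> p \<and> p < q \<and> q \<le> 2*n}"

end

theory Submission
  imports Defs
begin


lemma pres_eq_cong:
  assumes "pres_eq R u v" shows "pres_eq R (x @ u @ y) (x @ v @ y)"
  using assms
proof (induction rule: pres_eq.induct)
  case (pe_cancel xs a b ys)
  show ?case using pres_eq.pe_cancel[of R "x @ xs" a b "ys @ y"] by simp
next
  case (pe_rel r xs ys)
  show ?case using pres_eq.pe_rel[OF pe_rel.hyps, of "x @ xs" "ys @ y"] by simp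
qed (auto intro: pres_eq.intros)

lemma pres_eq_app:
  assumes "pres_eq R u u'" "pres_eq R v v'" shows "pres_eq R (u @ v) (u' @ v')"
proof -
  have "pres_eq R ([] @ u @ v) ([] @ u' @ v)" by (rule pres_eq_cong[OF assms(1)])
  moreover have "pres_eq R (u' @ v @ []) (u' @ v' @ [])" by (rule pres_eq_cong[OF assms(2)])
  ultimately show ?thesis by (auto intro: pres_eq.pe_trans)
qed

definition winv :: "'a fword \<Rightarrow> 'a fword" where
  "winv w = rev (map (\<lambda>(a,b). (a, \<not> b)) w)"

lemma winv_simps [simp]: "winv [] = []" "winv (x # w) = winv w @ [(fst x, \<not> snd x)]"
  "winv (u @ v) = winv v @ winv u" "winv (winv w) = w"
  by (auto simp: winv_def case_prod_beta rev_map comp_def)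

lemma pres_eq_winv: "pres_eq R (w @ winv w) []"
proof (induction w)
  case Nil then show ?case by (simp add: pres_eq.pe_refl)
next
  case (Cons x w)
  obtain a b where x: "x = (a, b)" by force
  have "pres_eq R ([x] @ (w @ winv w) @ [(a, \<not> b)]) ([x] @ [] @ [(a, \<not> b)])"
    by (rule pres_eq_cong[OF Cons.IH])
  moreover have "pres_eq R ([] @ [(a,b), (a, \<not> b)] @ []) ([] @ [])" by (rule pres_eq.pe_cancel)
  ultimately show ?case using x by (auto intro: pres_eq.pe_trans)
qed

lemma pres_eq_winv': "pres_eq R (winv w @ w) []"
  using pres_eq_winv[of R "winv w"] by simp

lemma words_over_simps [simp]:
  "[] \<in> words_over A"
  "(x # w \<in> words_over A) \<longleftrightarrow> fst x \<in> A \<and> w \<in> words_over A"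
  "(u @ v \<in> words_over A) \<longleftrightarrow> u \<in> words_over A \<and> v \<in> words_over A"
  "(winv w \<in> words_over A) \<longleftrightarrow> w \<in> words_over A"
  by (auto simp: words_over_def winv_def image_iff; force)+

lemma pres_class_self: "u \<in> words_over A \<Longrightarrow> u \<in> pres_class A R u"
  by (simp add: pres_class_def pres_eq.pe_refl)

lemma pres_class_eqI: "pres_eq R u v \<Longrightarrow> pres_class A R u = pres_class A R v"
  unfolding pres_class_def by (auto intro: pres_eq.pe_trans pres_eq.pe_sym)

lemma pres_class_eqD: "pres_class A R u = pres_class A R v \<Longrightarrow> v \<in> words_over A \<Longrightarrow> pres_eq R u v"
  unfolding pres_class_def using pres_eq.pe_refl by blast

lemma pres_class_eq_iff: "v \<in> words_over A \<Longrightarrow> pres_class A R u = pres_class A R v \<longleftrightarrow> pres_eq R u v"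
  using pres_class_eqD pres_class_eqI by blast

lemma some_in_class:
  assumes "u \<in> words_over A"
  shows "(SOME u'. u' \<in> pres_class A R u) \<in> words_over A \<and> pres_eq R u (SOME u'. u' \<in> pres_class A R u)"
proof -
  have "(SOME u'. u' \<in> pres_class A R u) \<in> pres_class A R u"
    using pres_class_self[OF assms] by (rule someI)
  then show ?thesis by (simp add: pres_class_def)
qed

lemma pres_mult_class:
  assumes "u \<in> words_over A" "v \<in> words_over A"
  shows "pres_mult A R (pres_class A R u) (pres_class A R v) = pres_class A R (u @ v)"
  unfolding pres_mult_def
  by (rule pres_class_eqI, rule pres_eq.pe_sym, rule pres_eq_app)
     (use some_in_class[OF assms(1)] some_in_class[OF assms(2)] in auto)

lemma pres_group_simps:
  "carrier (pres_group A R) = pres_class A R ` words_over A"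
  "x \<otimes>\<^bsub>pres_group A R\<^esub> y = pres_mult A R x y"
  "\<one>\<^bsub>pres_group A R\<^esub> = pres_class A R []"
  by (simp_all add: pres_group_def)

lemma pres_group_mult:
  "u \<in> words_over A \<Longrightarrow> v \<in> words_over A \<Longrightarrow>
   pres_class A R u \<otimes>\<^bsub>pres_group A R\<^esub> pres_class A R v = pres_class A R (u @ v)"
  by (simp add: pres_group_simps pres_mult_class)

lemma pres_group_is_group: "group (pres_group A R)"
proof (rule groupI)
  fix x y assume "x \<in> carrier (pres_group A R)" "y \<in> carrier (pres_group A R)"
  then show "x \<otimes>\<^bsub>pres_group A R\<^esub> y \<in> carrier (pres_group A R)"
    by (auto simp: pres_group_simps(1) pres_group_mult)
next
  show "\<one>\<^bsub>pres_group A R\<^esub> \<in> carrier (pres_group A R)" by (simp add: pres_group_simps)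
next
  fix x y z assume "x \<in> carrier (pres_group A R)" "y \<in> carrier (pres_group A R)"
    "z \<in> carrier (pres_group A R)"
  then show "x \<otimes>\<^bsub>pres_group A R\<^esub> y \<otimes>\<^bsub>pres_group A R\<^esub> z =
     x \<otimes>\<^bsub>pres_group A R\<^esub> (y \<otimes>\<^bsub>pres_group A R\<^esub> z)"
    by (auto simp: pres_group_simps(1) pres_group_mult)
next
  fix x assume "x \<in> carrier (pres_group A R)"
  then show "\<one>\<^bsub>pres_group A R\<^esub> \<otimes>\<^bsub>pres_group A R\<^esub> x = x"
    using pres_group_mult[of "[]" A] by (auto simp: pres_group_simps(1,3))
next
  fix x assume "x \<in> carrier (pres_group A R)"
  then obtain u where u: "u \<in> words_over A" "x = pres_class A R u" by (auto simp: pres_group_simps)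
  show "\<exists>y\<in>carrier (pres_group A R). y \<otimes>\<^bsub>pres_group A R\<^esub> x = \<one>\<^bsub>pres_group A R\<^esub>"
  proof (intro bexI[of _ "pres_class A R (winv u)"])
    show "pres_class A R (winv u) \<otimes>\<^bsub>pres_group A R\<^esub> x = \<one>\<^bsub>pres_group A R\<^esub>"
      using u pres_eq_winv'[of R u] pres_group_mult[of "winv u" A u R]
      by (simp add: pres_group_simps(3) pres_class_eqI)
  qed (use u in \<open>simp add: pres_group_simps\<close>)
qed

lemma pres_group_inv:
  "u \<in> words_over A \<Longrightarrow> inv\<^bsub>pres_group A R\<^esub> (pres_class A R u) = pres_class A R (winv u)"
  by (rule group.inv_equality[OF pres_group_is_group])
     (simp_all add: pres_mult_class pres_class_eqI[OF pres_eq_winv'] pres_group_simps)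

lemma pres_group_rel:
  "r \<in> R \<Longrightarrow> pres_class A R r = \<one>\<^bsub>pres_group A R\<^esub>"
  using pres_eq.pe_rel[of r R "[]" "[]"] by (simp add: pres_group_simps pres_class_eqI)

lemma pres_group_one_iff:
  "u \<in> words_over A \<Longrightarrow> pres_class A R u = \<one>\<^bsub>pres_group A R\<^esub> \<longleftrightarrow> pres_eq R u []"
  by (simp add: pres_group_simps pres_class_eq_iff)

lemma pres_group_carrierI: "u \<in> words_over A \<Longrightarrow> pres_class A R u \<in> carrier (pres_group A R)"
  by (simp add: pres_group_simps)

lemma pres_group_cons:
  "fst x \<in> A \<Longrightarrow> u \<in> words_over A \<Longrightarrow>
   pres_class A R (x # u) = pres_class A R [x] \<otimes>\<^bsub>pres_group A R\<^esub> pres_class A R u"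
  using pres_group_mult[of "[x]" A u R] by simp




locale bott =
  fixes n :: nat and C :: "nat \<Rightarrow> nat \<Rightarrow> bool"
  assumes n1: "n \<ge> 1" and bm: "bott_matrix n C"
begin

abbreviation WA where "WA \<equiv> {1..2*n}"
abbreviation W where "W \<equiv> cox_W n"
abbreviation wm (infixl "\<diamondop>" 70) where "x \<diamondop> y \<equiv> x \<otimes>\<^bsub>cox_W n\<^esub> y"
abbreviation wi where "wi x \<equiv> inv\<^bsub>cox_W n\<^esub> x"
abbreviation w1 where "w1 \<equiv> \<one>\<^bsub>cox_W n\<^esub>"

definition cl :: "nat fword \<Rightarrow> nat fword set" where
  "cl w = pres_class {1..2*n} (cox_rels n) w"

definition s :: "nat \<Rightarrow> nat fword set" where "s a = cl [(a, True)]"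

definition sw :: "nat list \<Rightarrow> nat fword" where "sw L = map (\<lambda>k. (k, True)) L"

lemma sw_simps: "sw [] = []" "sw (a # L) = (a, True) # sw L" "sw (L @ M) = sw L @ sw M"
  by (simp_all add: sw_def)

lemma sw_words [simp]: "sw L \<in> words_over A \<longleftrightarrow> set L \<subseteq> A"
  by (induction L) (auto simp: sw_simps)

lemma W_group: "group W"
  unfolding cox_W_def by (rule pres_group_is_group)

sublocale Wg: group W by (rule W_group)

lemma cl_carrier [simp]: "w \<in> words_over WA \<Longrightarrow> cl w \<in> carrier W"
  by (simp add: cl_def cox_W_def pres_group_carrierI)

lemma cl_mult: "u \<in> words_over WA \<Longrightarrow> v \<in> words_over WA \<Longrightarrow> cl u \<diamondop> cl v = cl (u @ v)"
  by (simp add: cl_def cox_W_def pres_group_mult)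

lemma cl_one: "cl [] = w1"
  by (simp add: cl_def cox_W_def pres_group_simps)

lemma cl_inv: "w \<in> words_over WA \<Longrightarrow> wi (cl w) = cl (winv w)"
  by (simp add: cl_def cox_W_def pres_group_inv)

lemma cl_rel: "r \<in> cox_rels n \<Longrightarrow> cl r = w1"
  by (simp add: cl_def cox_W_def pres_group_rel)

lemma W_carrier: "carrier W = cl ` words_over WA"
  by (simp add: cl_def[abs_def] cox_W_def pres_group_simps)

lemma s_carrier [simp]: "a \<in> WA \<Longrightarrow> s a \<in> carrier W"
  by (simp add: s_def)

lemma cl_cons: "fst x \<in> WA \<Longrightarrow> u \<in> words_over WA \<Longrightarrow> cl (x # u) = cl [x] \<diamondop> cl u"
  using cl_mult[of "[x]" u] by simp

lemma s_sq: "a \<in> WA \<Longrightarrow> s a \<diamondop> s a = w1"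
  unfolding s_def by (subst cl_mult) (auto intro!: cl_rel simp: cox_rels_def)

lemma s_cancel: "a \<in> WA \<Longrightarrow> x \<in> carrier W \<Longrightarrow> s a \<diamondop> (s a \<diamondop> x) = x"
  by (simp add: s_sq flip: Wg.m_assoc)

lemma s_inv [simp]: "a \<in> WA \<Longrightarrow> wi (s a) = s a"
  by (rule Wg.inv_equality) (auto simp: s_sq)

lemma cl_letter: "a \<in> WA \<Longrightarrow> cl [(a, b)] = s a"
proof (cases b)
  case False
  assume a: "a \<in> WA"
  have "cl [(a, False)] = wi (s a)" using a by (simp add: s_def cl_inv winv_def)
  then show ?thesis using a False by simp
qed (simp add: s_def)

definition commutes :: "nat \<Rightarrow> nat \<Rightarrow> bool" where
  "commutes a b \<longleftrightarrow> a = b \<or> (a \<noteq> b + n \<and> b \<noteq> a + n)"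

lemma s_comm:
  assumes "a \<in> WA" "b \<in> WA" "commutes a b" shows "s a \<diamondop> s b = s b \<diamondop> s a"
proof (cases "a = b")
  case False
  have key: "s i \<diamondop> s j = s j \<diamondop> s i" if "i \<in> WA" "j \<in> WA" "i < j" "j \<noteq> i + n" for i j
  proof -
    have "cl [(i, True), (j, True), (i, True), (j, True)] = w1"
      using that by (intro cl_rel) (auto simp: cox_rels_def)
    then have "(s i \<diamondop> s j) \<diamondop> (s i \<diamondop> s j) = w1"
      using that by (simp add: s_def cl_mult)
    then have "wi (s i \<diamondop> s j) = s i \<diamondop> s j"
      using that by (intro Wg.inv_equality) auto
    then show ?thesis using that by (simp add: Wg.inv_mult_group)
  qed
  show ?thesis
  proof (cases "a < b")
    case True then show ?thesis using key[of a b] assms by (auto simp: commutes_def)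
  next
    case False then show ?thesis using key[of b a] assms \<open>a \<noteq> b\<close> by (auto simp: commutes_def)
  qed
qed simp

lemma cl_sw_cons: "a \<in> WA \<Longrightarrow> set L \<subseteq> WA \<Longrightarrow> cl (sw (a # L)) = s a \<diamondop> cl (sw L)"
  by (simp add: s_def cl_mult sw_simps)

lemma cl_sw_append: "set L \<subseteq> WA \<Longrightarrow> set M \<subseteq> WA \<Longrightarrow> cl (sw (L @ M)) = cl (sw L) \<diamondop> cl (sw M)"
  by (simp add: cl_mult sw_simps)

lemma cl_sw_snoc: "set L \<subseteq> WA \<Longrightarrow> a \<in> WA \<Longrightarrow> cl (sw (L @ [a])) = cl (sw L) \<diamondop> s a"
  by (simp add: cl_mult s_def sw_simps)

lemma cl_sw_carrier [simp]: "set L \<subseteq> {1..n} \<Longrightarrow> cl (sw L) \<in> carrier W"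
  by (rule cl_carrier) auto

lemma comm_list:
  assumes "x \<in> carrier W" "set L \<subseteq> WA" "\<And>l. l \<in> set L \<Longrightarrow> x \<diamondop> s l = s l \<diamondop> x"
  shows "x \<diamondop> cl (sw L) = cl (sw L) \<diamondop> x"
  using assms(2,3)
proof (induction L)
  case Nil then show ?case using assms(1) by (simp add: cl_one sw_simps)
next
  case (Cons a L)
  have "x \<diamondop> cl (sw (a # L)) = (x \<diamondop> s a) \<diamondop> cl (sw L)"
    using Cons.prems(1) assms(1) by (simp add: cl_sw_cons Wg.m_assoc)
  also have "\<dots> = (s a \<diamondop> x) \<diamondop> cl (sw L)"
    using Cons.prems by simp
  also have "\<dots> = s a \<diamondop> (x \<diamondop> cl (sw L))"
    using Cons.prems(1) assms(1) by (simp add: Wg.m_assoc)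
  also have "\<dots> = s a \<diamondop> (cl (sw L) \<diamondop> x)" using Cons by simp
  also have "\<dots> = cl (sw (a # L)) \<diamondop> x"
    using Cons.prems assms(1) by (simp add: cl_sw_cons Wg.m_assoc)
  finally show ?case .
qed

lemma s_comm_low: "a \<in> {1..n} \<Longrightarrow> b \<in> {1..n} \<Longrightarrow> s a \<diamondop> s b = s b \<diamondop> s a"
  by (rule s_comm) (auto simp: commutes_def)

lemma s_comm_hi: "i \<in> {1..n} \<Longrightarrow> b \<in> {1..n} \<Longrightarrow> b \<noteq> i \<Longrightarrow> s (n+i) \<diamondop> s b = s b \<diamondop> s (n+i)"
  by (rule s_comm) (auto simp: commutes_def)

lemma s_comm_hh: "i \<in> {1..n} \<Longrightarrow> j \<in> {1..n} \<Longrightarrow> s (n+i) \<diamondop> s (n+j) = s (n+j) \<diamondop> s (n+i)"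
  by (rule s_comm) (auto simp: commutes_def)

lemma comm_sw:
  assumes "x \<in> carrier W" "set L \<subseteq> B" "B \<subseteq> WA" "\<And>l. l \<in> B \<Longrightarrow> x \<diamondop> s l = s l \<diamondop> x"
  shows "x \<diamondop> cl (sw L) = cl (sw L) \<diamondop> x"
  using assms by (intro comm_list) auto

lemma sq_list:
  assumes "set L \<subseteq> {1..n}"
  shows "cl (sw L) \<diamondop> cl (sw L) = w1"
  using assms
proof (induction L)
  case Nil then show ?case by (simp add: cl_one sw_simps)
next
  case (Cons a L)
  have LW: "set L \<subseteq> WA" and aW: "a \<in> WA" using Cons.prems by auto
  have c: "s a \<diamondop> cl (sw L) = cl (sw L) \<diamondop> s a"
    apply (rule comm_sw[where B="{1..n}"]) using Cons.prems apply auto[3] by (rule s_comm_low) (use Cons.prems in auto)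
  have "cl (sw (a # L)) \<diamondop> cl (sw (a # L)) = s a \<diamondop> (cl (sw L) \<diamondop> s a) \<diamondop> cl (sw L)"
    using LW aW by (simp add: cl_sw_cons Wg.m_assoc)
  also have "\<dots> = (s a \<diamondop> s a) \<diamondop> (cl (sw L) \<diamondop> cl (sw L))"
    using LW aW by (simp add: c[symmetric] Wg.m_assoc)
  also have "\<dots> = w1" using Cons aW by (simp add: s_sq)
  finally show ?case .
qed

lemma inv_list:
  assumes "set L \<subseteq> {1..n}" shows "wi (cl (sw L)) = cl (sw L)"
  using assms by (intro Wg.inv_equality sq_list) auto

definition sig :: "nat \<Rightarrow> nat list" where "sig i = filter (C i) [i + 1 ..< n + 1]"

lemma sig_set: "set (sig i) \<subseteq> {i+1..n}" by (auto simp: sig_def)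

lemma sig_W: "set (sig i) \<subseteq> WA" using sig_set[of i] by auto

definition al :: "nat \<Rightarrow> nat fword set" where "al i = cl (alpha_word C n (n + i))"

lemma al_eq: "i \<in> {1..n} \<Longrightarrow> al i = s (n + i) \<diamondop> s i \<diamondop> cl (sw (sig i))"
proof -
  assume i: "i \<in> {1..n}"
  have "alpha_word C n (n + i) = [(n+i, True), (i, True)] @ sw (sig i)"
    by (simp add: alpha_word_def sig_def sw_def)
  moreover have sW: "set (sig i) \<subseteq> WA" using sig_W .
  moreover have "cl ((n+i,True) # (i,True) # sw (sig i)) = cl [(n+i,True)] \<diamondop> (cl [(i,True)] \<diamondop> cl (sw (sig i)))"
    using i sW cl_cons[of "(n+i,True)" "(i,True) # sw (sig i)"]
      cl_cons[of "(i,True)" "sw (sig i)"] by simp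
  ultimately show ?thesis using i by (simp add: al_def s_def Wg.m_assoc)
qed


lemma al_carrier [simp]: "i \<in> {1..n} \<Longrightarrow> al i \<in> carrier W"
  using sig_W by (simp add: al_eq)

lemma comm_mult: "x \<in> carrier W \<Longrightarrow> a \<in> carrier W \<Longrightarrow> b \<in> carrier W \<Longrightarrow>
  x \<diamondop> a = a \<diamondop> x \<Longrightarrow> x \<diamondop> b = b \<diamondop> x \<Longrightarrow> x \<diamondop> (a \<diamondop> b) = (a \<diamondop> b) \<diamondop> x"
  by (metis Wg.m_assoc)

definition cj where "cj g x = g \<diamondop> x \<diamondop> wi g"

lemma cj_inv: "g \<in> carrier W \<Longrightarrow> x \<in> carrier W \<Longrightarrow> cj g (wi x) = wi (cj g x)"
  by (simp add: cj_def Wg.inv_mult_group Wg.m_assoc)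

lemma cj_mult: "g \<in> carrier W \<Longrightarrow> h \<in> carrier W \<Longrightarrow> x \<in> carrier W \<Longrightarrow> cj (g \<diamondop> h) x = cj g (cj h x)"
  by (simp add: cj_def Wg.inv_mult_group Wg.m_assoc)

lemma cj_carrier [simp]: "g \<in> carrier W \<Longrightarrow> x \<in> carrier W \<Longrightarrow> cj g x \<in> carrier W"
  by (simp add: cj_def)

lemma cj_comm: "g \<in> carrier W \<Longrightarrow> x \<in> carrier W \<Longrightarrow> g \<diamondop> x = x \<diamondop> g \<Longrightarrow> cj g x = x"
  by (simp add: cj_def Wg.m_assoc)

lemma cj_s_al:
  assumes k: "k \<in> {1..n}" and i: "i \<in> {1..n}"
  shows "cj (s k) (al i) = (if k = i then wi (al i) else al i)"
proof -
  have kW: "k \<in> WA" and iW: "i \<in> WA" "n + i \<in> WA" using k i by auto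
  let ?\<sigma> = "cl (sw (sig i))"
  have \<sigma>: "?\<sigma> \<in> carrier W" using sig_W by simp
  have csig: "s k \<diamondop> ?\<sigma> = ?\<sigma> \<diamondop> s k"
    apply (rule comm_sw[where B="{1..n}"]) using sig_set[of i] k apply auto[3] by (rule s_comm_low) (use k in auto)
  show ?thesis
  proof (cases "k = i")
    case True
    have c3: "s i \<diamondop> ?\<sigma> = ?\<sigma> \<diamondop> s i" using csig by (simp only: True)
    have "cj (s k) (al i) = s i \<diamondop> (s (n+i) \<diamondop> (s i \<diamondop> (?\<sigma> \<diamondop> s i)))"
      using True iW \<sigma> by (simp add: cj_def al_eq i Wg.m_assoc)
    also have "\<dots> = s i \<diamondop> (s (n+i) \<diamondop> (s i \<diamondop> (s i \<diamondop> ?\<sigma>)))" by (simp add: c3)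
    also have "\<dots> = s i \<diamondop> s (n+i) \<diamondop> ?\<sigma>" using iW \<sigma> by (simp add: s_cancel Wg.m_assoc)
    finally have e: "cj (s k) (al i) = s i \<diamondop> s (n+i) \<diamondop> ?\<sigma>" .
    have c2: "s (n+i) \<diamondop> ?\<sigma> = ?\<sigma> \<diamondop> s (n+i)"
      apply (rule comm_sw[where B="{i+1..n}"]) using sig_set[of i] i apply auto[3] by (rule s_comm_hi) (use i in auto)
    have "(s i \<diamondop> s (n+i) \<diamondop> ?\<sigma>) \<diamondop> al i = s i \<diamondop> (s (n+i) \<diamondop> (?\<sigma> \<diamondop> s (n+i))) \<diamondop> s i \<diamondop> ?\<sigma>"
      using iW \<sigma> i by (simp add: al_eq Wg.m_assoc)
    also have "\<dots> = s i \<diamondop> (s (n+i) \<diamondop> s (n+i)) \<diamondop> (?\<sigma> \<diamondop> s i) \<diamondop> ?\<sigma>"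
      using iW \<sigma> by (simp add: c2[symmetric] Wg.m_assoc)
    also have "\<dots> = (s i \<diamondop> s i) \<diamondop> (?\<sigma> \<diamondop> ?\<sigma>)"
      using iW \<sigma> by (simp add: s_sq s_cancel c3[symmetric] Wg.m_assoc)
    also have "\<dots> = w1" using iW sq_list[OF order.trans[OF sig_set]] by (simp add: s_sq)
    finally have "wi (al i) = s i \<diamondop> s (n+i) \<diamondop> ?\<sigma>"
      using iW \<sigma> i by (intro Wg.inv_equality) auto
    then show ?thesis using e True by simp
  next
    case False
    have c1: "s k \<diamondop> s (n+i) = s (n+i) \<diamondop> s k" using kW iW k i False
      by (intro s_comm) (auto simp: commutes_def)
    have c2: "s k \<diamondop> s i = s i \<diamondop> s k" using kW iW k i False
      by (intro s_comm) (auto simp: commutes_def)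
    have "s k \<diamondop> al i = al i \<diamondop> s k"
      unfolding al_eq[OF i] using kW iW \<sigma> by (intro comm_mult c1 c2 csig) auto
    then show ?thesis using False kW i by (simp add: cj_comm)
  qed
qed

end



lemma count_distinct: "distinct xs \<Longrightarrow> length (filter (\<lambda>j. j = k) xs) = (if k \<in> set xs then 1 else 0)"
  by (induction xs) auto

context bott begin

lemma inv_cancel_left [simp]: "g \<in> carrier W \<Longrightarrow> x \<in> carrier W \<Longrightarrow> wi g \<diamondop> (g \<diamondop> x) = x"
  by (simp flip: Wg.m_assoc)

lemma cl_sw_cons_low: "a \<in> {1..n} \<Longrightarrow> set L \<subseteq> {1..n} \<Longrightarrow> cl (sw (a # L)) = s a \<diamondop> cl (sw L)"
  by (rule cl_sw_cons) auto

lemma cl_sw_snoc_low: "a \<in> {1..n} \<Longrightarrow> set L \<subseteq> {1..n} \<Longrightarrow> cl (sw (L @ [a])) = cl (sw L) \<diamondop> s a"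
  by (rule cl_sw_snoc) auto

lemma cj_sh_al:
  assumes i: "i \<in> {1..n}" and j: "j \<in> {1..n}" and ij: "i < j"
  shows "cj (s (n+i)) (al j) = al j"
proof -
  have c1: "s (n+i) \<diamondop> s (n+j) = s (n+j) \<diamondop> s (n+i)" using i j by (rule s_comm_hh)
  have c2: "s (n+i) \<diamondop> s j = s j \<diamondop> s (n+i)" using i j ij by (intro s_comm_hi) auto
  have c3: "s (n+i) \<diamondop> cl (sw (sig j)) = cl (sw (sig j)) \<diamondop> s (n+i)"
    apply (rule comm_sw[where B="{j+1..n}"]) using sig_set[of j] i j apply auto[3]
    by (rule s_comm_hi) (use i ij in auto)
  have "s (n+i) \<diamondop> al j = al j \<diamondop> s (n+i)"
    unfolding al_eq[OF j] using i j sig_W by (intro comm_mult c1 c2 c3) auto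
  then show ?thesis using i j by (intro cj_comm) auto
qed

lemma cj_list_al:
  assumes "set L \<subseteq> {1..n}" and j: "j \<in> {1..n}"
  shows "cj (cl (sw L)) (al j) = (if odd (length (filter (\<lambda>k. k = j) L)) then wi (al j) else al j)"
  using assms(1)
proof (induction L)
  case Nil then show ?case using j by (simp add: sw_simps cl_one cj_def)
next
  case (Cons a L)
  have a: "a \<in> {1..n}" and L: "set L \<subseteq> {1..n}" using Cons.prems by auto
  have "cj (cl (sw (a # L))) (al j) = cj (s a) (cj (cl (sw L)) (al j))"
    using a L j by (simp add: cl_sw_cons_low cj_mult)
  also have "\<dots> = (if odd (length (filter (\<lambda>k. k = j) (a # L))) then wi (al j) else al j)"
    using Cons.IH[OF L] a j by (auto simp: cj_inv cj_s_al)
  finally show ?case .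
qed

lemma cj_al_al:
  assumes i: "i \<in> {1..n}" and j: "j \<in> {1..n}" and ij: "i < j"
  shows "cj (al i) (al j) = (if C i j then wi (al j) else al j)"
proof -
  have sig: "set (sig i) \<subseteq> {1..n}" using sig_set[of i] by auto
  have cnt: "length (filter (\<lambda>k. k = j) (sig i)) = (if C i j then 1 else 0)"
    using j ij by (subst count_distinct) (auto simp: sig_def)
  have "cj (al i) (al j) = cj (s (n+i)) (cj (s i) (cj (cl (sw (sig i))) (al j)))"
    unfolding al_eq[OF i] using i j sig by (simp add: cj_mult)
  also have "\<dots> = (if C i j then wi (al j) else al j)"
    using i j ij sig by (simp add: cj_list_al cnt cj_inv cj_s_al cj_sh_al)
  finally show ?thesis .
qed

definition tau :: "(nat \<Rightarrow> bool) \<Rightarrow> nat fword set" where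
  "tau p = cl (sw (filter p [1..<n+1]))"

lemma tau_carrier [simp]: "tau p \<in> carrier W"
  unfolding tau_def by (rule cl_sw_carrier) auto

definition tg :: "(nat \<Rightarrow> bool) \<Rightarrow> nat \<Rightarrow> nat \<Rightarrow> bool" where
  "tg p a x = (if x = a then \<not> p a else p x)"

lemma tg_simps [simp]: "tg p a a = (\<not> p a)" "b \<noteq> a \<Longrightarrow> tg p a b = p b"
  by (simp_all add: tg_def)

lemma toggle_gen:
  assumes "distinct M" "set M \<subseteq> {1..n}" "a \<in> set M"
  shows "cl (sw (filter p M)) \<diamondop> s a = cl (sw (filter (tg p a) M))"
  using assms
proof (induction M)
  case Nil then show ?case by simp
next
  case (Cons b M)
  have a: "a \<in> {1..n}" and b: "b \<in> {1..n}" and M: "set M \<subseteq> {1..n}" using Cons.prems by auto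
  have FM: "set (filter q M) \<subseteq> {1..n}" for q using M by auto
  have comm: "cl (sw (filter q M)) \<diamondop> s a = s a \<diamondop> cl (sw (filter q M))" for q
    apply (rule comm_sw[where B="{1..n}", symmetric]) using FM a apply auto[3]
    by (rule s_comm_low) (use a in auto)
  show ?case
  proof (cases "b = a")
    case True
    then have aM: "a \<notin> set M" using Cons.prems by auto
    then have eqf: "filter (tg p a) M = filter p M" by (intro filter_cong) (auto simp: tg_def)
    show ?thesis
    proof (cases "p a")
      case pa: True
      have "cl (sw (filter p (b # M))) \<diamondop> s a = s a \<diamondop> (cl (sw (filter p M)) \<diamondop> s a)"
        using True pa a FM by (simp add: cl_sw_cons_low Wg.m_assoc)
      also have "\<dots> = cl (sw (filter p M))" using a FM by (simp add: comm s_cancel)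
      moreover have "filter (tg p a) (b # M) = filter p M"
        using True pa aM eqf by simp
      ultimately show ?thesis by metis
    next
      case pa: False
      have f1: "filter p (b # M) = filter p M" using True pa by simp
      have f2: "filter (tg p a) (b # M) = a # filter p M"
        using True pa aM eqf by simp
      have e3: "cl (sw (a # filter p M)) = s a \<diamondop> cl (sw (filter p M))"
        using a FM by (simp add: cl_sw_cons_low)
      show ?thesis unfolding f1 f2 e3 by (rule comm)
    qed
  next
    case False
    then have aM: "a \<in> set M" using Cons.prems by auto
    have IH: "cl (sw (filter p M)) \<diamondop> s a = cl (sw (filter (tg p a) M))"
      by (rule Cons.IH) (use Cons.prems aM in auto)
    show ?thesis
    proof (cases "p b")
      case True
      then show ?thesis using False b a FM IH by (simp add: cl_sw_cons_low Wg.m_assoc)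
    next
      case pb: False
      then show ?thesis using False IH by simp
    qed
  qed
qed

lemma tau_toggle: "a \<in> {1..n} \<Longrightarrow> tau p \<diamondop> s a = tau (tg p a)"
  unfolding tau_def by (rule toggle_gen) auto

lemma tau_list: "set L \<subseteq> {1..n} \<Longrightarrow> \<exists>p'. tau p \<diamondop> cl (sw L) = tau p'"
proof (induction L arbitrary: p)
  case Nil then show ?case by (auto simp: sw_simps cl_one)
next
  case (Cons a L)
  have a: "a \<in> {1..n}" and L: "set L \<subseteq> {1..n}" using Cons.prems by auto
  have "tau p \<diamondop> cl (sw (a # L)) = tau (tg p a) \<diamondop> cl (sw L)"
    using a L by (simp add: cl_sw_cons_low tau_toggle flip: Wg.m_assoc)
  then show ?case using Cons.IH[OF L] by metis
qed

definition Hgen where "Hgen = pres_class {1..2*n} (cox_rels n) ` alpha_word C n ` {n+1..2*n}"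

lemma Hgen_eq: "Hgen = al ` {1..n}"
proof -
  have "{n+1..2*n} = (\<lambda>i. n + i) ` {1..n}"
    by (auto simp: image_iff intro!: bexI[of _ "x - n" for x])
  then have "alpha_word C n ` {n+1..2*n} = (\<lambda>i. alpha_word C n (n+i)) ` {1..n}"
    by (simp only: image_image)
  then show ?thesis unfolding Hgen_def al_def[abs_def] cl_def[abs_def] by (simp only: image_image)
qed

abbreviation H where "H \<equiv> generate W Hgen"

lemma Hgen_sub: "Hgen \<subseteq> carrier W" by (auto simp: Hgen_eq)

lemma al_H: "i \<in> {1..n} \<Longrightarrow> al i \<in> H"
  by (rule generate.incl) (auto simp: Hgen_eq)

lemma al_inv_H: "i \<in> {1..n} \<Longrightarrow> wi (al i) \<in> H"
  by (rule generate.inv) (auto simp: Hgen_eq)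

lemma H_sub: "H \<subseteq> carrier W" using Wg.generate_incl[OF Hgen_sub] .

lemma s_high: "i \<in> {1..n} \<Longrightarrow> s (n+i) = al i \<diamondop> cl (sw (sig i @ [i]))"
proof -
  assume i: "i \<in> {1..n}"
  have sg: "set (sig i) \<subseteq> {1..n}" using sig_set[of i] by auto
  let ?\<sigma> = "cl (sw (sig i))"
  have "al i \<diamondop> cl (sw (sig i @ [i])) = s (n+i) \<diamondop> (s i \<diamondop> ((?\<sigma> \<diamondop> ?\<sigma>) \<diamondop> s i))"
    using i sig_W sg by (simp add: al_eq cl_sw_snoc_low Wg.m_assoc)
  also have "\<dots> = s (n+i)" using i sg by (simp add: sq_list s_sq)
  finally show ?thesis by simp
qed

lemma transversal:
  assumes "w \<in> words_over WA" shows "\<exists>h\<in>H. \<exists>p. cl w = h \<diamondop> tau p"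
  using assms
proof (induction w rule: rev_induct)
  case Nil
  have "cl [] = w1 \<diamondop> tau (\<lambda>_. False)" by (simp add: cl_one tau_def sw_simps)
  then show ?case using generate.one by blast
next
  case (snoc x w)
  obtain a b where x: "x = (a, b)" by force
  have a: "a \<in> WA" and w: "w \<in> words_over WA" using snoc.prems x by auto
  obtain h p where h: "h \<in> H" and hp: "cl w = h \<diamondop> tau p" using snoc.IH[OF w] by blast
  have hc: "h \<in> carrier W" using h H_sub by auto
  have e: "cl (w @ [x]) = h \<diamondop> (tau p \<diamondop> s a)"
    using a w hp hc by (simp add: x cl_mult[symmetric] cl_letter Wg.m_assoc)
  show ?case
  proof (cases "a \<le> n")
    case True
    then have "a \<in> {1..n}" using a by auto
    then show ?thesis using e h by (auto simp: tau_toggle)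
  next
    case False
    define i where "i = a - n"
    have i: "i \<in> {1..n}" and ai: "a = n + i" using False a by (auto simp: i_def)
    have L: "set (sig i @ [i]) \<subseteq> {1..n}" using sig_set[of i] i by auto
    obtain p' where p': "tau p \<diamondop> cl (sw (sig i @ [i])) = tau p'" using tau_list[OF L] by blast
    have cjH: "cj (tau p) (al i) \<in> H"
      unfolding tau_def using i al_H al_inv_H by (subst cj_list_al) auto
    have "tau p \<diamondop> s a = cj (tau p) (al i) \<diamondop> (tau p \<diamondop> cl (sw (sig i @ [i])))"
      unfolding ai s_high[OF i] using i L by (simp add: cj_def Wg.m_assoc)
    then have "cl (w @ [x]) = (h \<diamondop> cj (tau p) (al i)) \<diamondop> tau p'"
      using e p' hc i by (simp add: Wg.m_assoc)
    moreover have "h \<diamondop> cj (tau p) (al i) \<in> H" using h cjH by (rule generate.eng)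
    ultimately show ?thesis by blast
  qed
qed

end



lemma phi_word_append: "phi_word C n (u @ v) k = (phi_word C n u k \<noteq> phi_word C n v k)"
  by (simp add: phi_word_def)

lemma phi_word_Nil [simp]: "phi_word C n [] k = False"
  by (simp add: phi_word_def)

lemma phi_word_cons: "phi_word C n (x # v) k = (lam C n (fst x) k \<noteq> phi_word C n v k)"
  by (simp add: phi_word_def)

lemma phi_word_inv: "pres_eq (cox_rels n) u v \<Longrightarrow> phi_word C n u = phi_word C n v"
proof (induction rule: pres_eq.induct)
  case (pe_cancel xs a b ys)
  then show ?case by (auto simp: phi_word_append phi_word_cons fun_eq_iff)
next
  case (pe_rel r xs ys)
  then show ?case by (auto simp: phi_word_append phi_word_cons fun_eq_iff cox_rels_def)
qed auto

lemma Z2n_group: "group (Z2n n)"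
proof (rule groupI)
  fix x assume "x \<in> carrier (Z2n n)"
  then show "\<exists>y\<in>carrier (Z2n n). y \<otimes>\<^bsub>Z2n n\<^esub> x = \<one>\<^bsub>Z2n n\<^esub>"
    by (intro bexI[of _ x]) (simp_all add: Z2n_def)
qed (simp_all add: Z2n_def fun_eq_iff, blast+)

context bott begin

lemma phi_cl: "w \<in> words_over WA \<Longrightarrow> phi C n (cl w) = phi_word C n w"
proof -
  assume w: "w \<in> words_over WA"
  have "pres_eq (cox_rels n) w (SOME u. u \<in> pres_class WA (cox_rels n) w)"
    using some_in_class[OF w, of "cox_rels n"] by blast
  from phi_word_inv[OF this] show ?thesis unfolding phi_def cl_def by simp
qed

lemma phi_word_carrier: "w \<in> words_over WA \<Longrightarrow> phi_word C n w \<in> carrier (Z2n n)"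
proof (induction w)
  case Nil then show ?case by (simp add: Z2n_def phi_word_def)
next
  case (Cons x w)
  have x: "fst x \<in> WA" and w0: "w \<in> words_over WA" using Cons.prems by simp_all
  have "phi_word C n w \<in> carrier (Z2n n)" using Cons.IH[OF w0] .
  then have w: "\<forall>k. phi_word C n w k \<longrightarrow> k \<in> {1..n}" unfolding Z2n_def by simp
  have l: "lam C n (fst x) k \<Longrightarrow> k \<in> {1..n}" for k using x by (auto simp: lam_def split: if_splits)
  show ?case unfolding Z2n_def partial_object.simps mem_Collect_eq phi_word_cons
    using w l by blast
qed

lemma phi_hom: "phi C n \<in> hom W (Z2n n)"
proof (rule homI)
  fix x assume "x \<in> carrier W"
  then obtain w where "w \<in> words_over WA" "x = cl w" by (auto simp: W_carrier)
  then show "phi C n x \<in> carrier (Z2n n)" by (simp add: phi_cl phi_word_carrier)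
next
  fix x y assume "x \<in> carrier W" "y \<in> carrier W"
  then obtain u v where "u \<in> words_over WA" "x = cl u" "v \<in> words_over WA" "y = cl v"
    by (auto simp: W_carrier)
  then show "phi C n (x \<diamondop> y) = phi C n x \<otimes>\<^bsub>Z2n n\<^esub> phi C n y"
    by (simp add: cl_mult phi_cl Z2n_def phi_word_append fun_eq_iff)
qed

lemma phi_group_hom: "group_hom W (Z2n n) (phi C n)"
  by (simp add: group_hom_def group_hom_axioms_def W_group Z2n_group phi_hom)

abbreviation K where "K \<equiv> kernel W (Z2n n) (phi C n)"

lemma K_subgroup: "subgroup K W"
  by (rule group_hom.subgroup_kernel[OF phi_group_hom])

lemma alpha_eq: "alpha_word C n (n + i) = [(n+i, True), (i, True)] @ sw (sig i)"
  by (simp add: alpha_word_def sig_def sw_def)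

lemma al_word: "i \<in> {1..n} \<Longrightarrow> alpha_word C n (n + i) \<in> words_over WA"
  using sig_W[of i] by (simp add: alpha_eq)

lemma phi_sw: "set L \<subseteq> {1..n} \<Longrightarrow> phi_word C n (sw L) k = odd (length (filter (\<lambda>j. j = k) L))"
  by (induction L) (auto simp: sw_simps phi_word_cons lam_def)

lemma phi_al: "i \<in> {1..n} \<Longrightarrow> phi C n (al i) = (\<lambda>_. False)"
proof
  fix k assume i: "i \<in> {1..n}"
  have sg: "set (sig i) \<subseteq> {1..n}" using sig_set[of i] by auto
  have d: "distinct (sig i)" by (simp add: sig_def)
  have ss: "k \<in> set (sig i) \<longleftrightarrow> (i < k \<and> k \<le> n \<and> C i k)" by (auto simp: sig_def)
  have "phi C n (al i) k = phi_word C n ([(n+i, True), (i, True)] @ sw (sig i)) k"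
    unfolding al_def using al_word[OF i] by (simp add: phi_cl alpha_eq)
  also have "\<dots> = (lam C n (n+i) k \<noteq> (lam C n i k \<noteq> (k \<in> set (sig i))))"
    by (simp add: phi_word_append phi_word_cons phi_sw[OF sg] count_distinct[OF d])
  also have "\<dots> = False" using i by (simp add: lam_def ss) blast
  finally show "phi C n (al i) k = False" .
qed

lemma Hgen_K: "Hgen \<subseteq> K"
  using phi_al by (auto simp: Hgen_eq kernel_def Z2n_def)

lemma H_sub_K: "H \<subseteq> K"
  by (rule Wg.generate_subgroup_incl[OF Hgen_K K_subgroup])

lemma phi_tau: "k \<in> {1..n} \<Longrightarrow> phi C n (tau p) k = p k"
proof -
  assume k: "k \<in> {1..n}"
  define L where "L = filter p [1..<n+1]"
  have L: "set L \<subseteq> {1..n}" "distinct L" by (auto simp: L_def)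
  have "phi C n (tau p) k = phi_word C n (sw L) k"
    unfolding tau_def L_def[symmetric] using L by (subst phi_cl) auto
  also have "\<dots> = odd (length (filter (\<lambda>j. j = k) L))" by (rule phi_sw[OF L(1)])
  also have "\<dots> = (k \<in> set L)" by (simp add: count_distinct[OF L(2)])
  also have "\<dots> = p k" using k by (auto simp: L_def simp del: upt_Suc)
  finally show ?thesis .
qed

lemma K_sub_H: "K \<subseteq> H"
proof
  fix x assume x: "x \<in> K"
  then have xc: "x \<in> carrier W" and px: "phi C n x = (\<lambda>_. False)"
    by (auto simp: kernel_def Z2n_def)
  obtain w where w: "w \<in> words_over WA" "x = cl w" using xc by (auto simp: W_carrier)
  obtain h p where h: "h \<in> H" and hp: "x = h \<diamondop> tau p" using transversal[OF w(1)] w(2) by blast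
  have hc: "h \<in> carrier W" using h H_sub by auto
  have ph: "phi C n h = (\<lambda>_. False)" using h H_sub_K by (auto simp: kernel_def Z2n_def)
  have "phi C n x = phi C n h \<otimes>\<^bsub>Z2n n\<^esub> phi C n (tau p)"
    using hp hc phi_hom by (simp add: hom_mult)
  then have "phi C n (tau p) = (\<lambda>_. False)" using px ph by (simp add: Z2n_def fun_eq_iff)
  then have "\<forall>k\<in>{1..n}. \<not> p k" using phi_tau[of _ p] by metis
  then have "filter p [1..<n+1] = []" by (auto simp: filter_empty_conv)
  then have "tau p = w1" by (simp add: tau_def sw_simps cl_one)
  then show "x \<in> H" using hp hc h by simp
qed

lemma partA: "H = K" using H_sub_K K_sub_H by blast

end



context bott begin

definition PA where "PA = {n+1..2*n}"
lemma PA_iff [simp]: "x \<in> PA \<longleftrightarrow> n < x \<and> x \<le> 2*n" by (auto simp: PA_def)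
abbreviation P where "P \<equiv> pres_group PA (bott_rels C n)"
abbreviation pm (infixl "\<boxtimes>" 70) where "x \<boxtimes> y \<equiv> x \<otimes>\<^bsub>P\<^esub> y"
abbreviation pinv where "pinv x \<equiv> inv\<^bsub>P\<^esub> x"
abbreviation p1 where "p1 \<equiv> \<one>\<^bsub>P\<^esub>"

definition pc :: "nat fword \<Rightarrow> nat fword set" where
  "pc w = pres_class PA (bott_rels C n) w"

lemma P_group: "group P" by (rule pres_group_is_group)

sublocale Pg: group P by (rule P_group)

lemma pc_carrier [simp]: "w \<in> words_over PA \<Longrightarrow> pc w \<in> carrier P"
  by (simp add: pc_def pres_group_carrierI)

lemma pc_mult: "u \<in> words_over PA \<Longrightarrow> v \<in> words_over PA \<Longrightarrow> pc u \<boxtimes> pc v = pc (u @ v)"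
  by (simp add: pc_def pres_group_mult)

lemma pc_one: "pc [] = p1" by (simp add: pc_def pres_group_simps)

lemma P_carrier: "carrier P = pc ` words_over PA"
  by (simp add: pc_def[abs_def] pres_group_simps)

definition A :: "nat \<Rightarrow> nat fword set" where "A i = pc [(n + i, True)]"

lemma A_carrier [simp]: "i \<in> {1..n} \<Longrightarrow> A i \<in> carrier P" by (simp add: A_def)

lemma pc_letter: "i \<in> {1..n} \<Longrightarrow> pc [(n + i, b)] = (if b then A i else pinv (A i))"
  using pres_group_inv[of "[(n+i, True)]" PA "bott_rels C n"]
  by (auto simp: A_def pc_def winv_def)

lemma pc_rel: "r \<in> bott_rels C n \<Longrightarrow> pc r = p1"
  by (simp add: pc_def pres_group_rel)

definition sl :: "nat \<times> bool \<Rightarrow> nat fword" where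
  "sl x = (if snd x then alpha_word C n (fst x) else winv (alpha_word C n (fst x)))"

definition subst :: "nat fword \<Rightarrow> nat fword" where "subst w = concat (map sl w)"

lemma subst_simps [simp]: "subst [] = []" "subst (x # w) = sl x @ subst w"
  "subst (u @ v) = subst u @ subst v"
  by (simp_all add: subst_def)

lemma subst_words: "w \<in> words_over PA \<Longrightarrow> subst w \<in> words_over WA"
proof (induction w)
  case (Cons x w)
  obtain i where i: "i \<in> {1..n}" "fst x = n + i"
    using Cons.prems by (intro that[of "fst x - n"]) auto
  then show ?case using Cons al_word[OF i(1)] by (auto simp: sl_def)
qed simp

lemma cl_sl: "i \<in> {1..n} \<Longrightarrow> cl (sl (n+i, b)) = (if b then al i else wi (al i))"
  using al_word[of i] by (auto simp: sl_def al_def cl_inv)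

lemma cl_subst_rel:
  assumes "r \<in> bott_rels C n" shows "cl (subst r) = w1"
proof -
  obtain p q where pq: "n + 1 \<le> p" "p < q" "q \<le> 2*n" "r = x_rel C n p q"
    using assms by (auto simp: bott_rels_def)
  define i where "i = p - n"
  define j where "j = q - n"
  have i: "i \<in> {1..n}" and j: "j \<in> {1..n}" and ij: "i < j" and p: "p = n + i" and q: "q = n + j"
    using pq by (auto simp: i_def j_def)
  have sw: "\<And>b. sl (n+i, b) \<in> words_over WA" "\<And>b. sl (n+j, b) \<in> words_over WA"
    using al_word[OF i] al_word[OF j] by (auto simp: sl_def)
  have mul4: "cl (sl x1 @ sl x2 @ sl x3 @ sl x4) = cl (sl x1) \<diamondop> cl (sl x2) \<diamondop> cl (sl x3) \<diamondop> cl (sl x4)"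
    if "sl x1 \<in> words_over WA" "sl x2 \<in> words_over WA" "sl x3 \<in> words_over WA" "sl x4 \<in> words_over WA"
    for x1 x2 x3 x4 using that by (simp add: cl_mult Wg.m_assoc)
  have ai: "al i \<in> carrier W" and aj: "al j \<in> carrier W" using i j by auto
  have cj1: "cj (al i) (al j) = (if C i j then wi (al j) else al j)" by (rule cj_al_al[OF i j ij])
  show ?thesis
  proof (cases "C i j")
    case True
    have "cl (subst r) = al i \<diamondop> wi (al j) \<diamondop> wi (al i) \<diamondop> wi (al j)"
      using True pq sw by (simp add: x_rel_def p q mul4 cl_sl i j)
    also have "\<dots> = cj (al i) (wi (al j)) \<diamondop> wi (al j)" by (simp add: cj_def)
    also have "\<dots> = w1" using ai aj True by (simp add: cj_inv cj1)
    finally show ?thesis .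
  next
    case False
    have "cl (subst r) = al i \<diamondop> al j \<diamondop> wi (al i) \<diamondop> wi (al j)"
      using False pq sw by (simp add: x_rel_def p q mul4 cl_sl i j)
    also have "\<dots> = cj (al i) (al j) \<diamondop> wi (al j)" by (simp add: cj_def)
    also have "\<dots> = w1" using ai aj False by (simp add: cj1)
    finally show ?thesis .
  qed
qed

lemma rel_words: "r \<in> bott_rels C n \<Longrightarrow> r \<in> words_over PA"
  by (auto simp: bott_rels_def x_rel_def)

lemma subst_pres: "pres_eq (bott_rels C n) u v \<Longrightarrow> pres_eq (cox_rels n) (subst u) (subst v)"
proof (induction rule: pres_eq.induct)
  case (pe_cancel xs a b ys)
  have "pres_eq (cox_rels n) (sl (a, b) @ sl (a, \<not> b)) []"
    by (cases b) (simp_all add: sl_def pres_eq_winv pres_eq_winv')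
  from pres_eq_cong[OF this, of "subst xs" "subst ys"] show ?case by simp
next
  case (pe_rel r xs ys)
  have "pres_eq (cox_rels n) (subst r) []"
    using cl_subst_rel[OF pe_rel] subst_words[OF rel_words[OF pe_rel]]
    by (simp add: cl_def cox_W_def pres_group_one_iff flip: cl_one)
  from pres_eq_cong[OF this, of "subst xs" "subst ys"] show ?case by simp
qed (auto intro: pres_eq.intros)

definition hh :: "nat fword set \<Rightarrow> nat fword set" where
  "hh U = cl (subst (SOME u. u \<in> U))"

lemma hh_pc: "w \<in> words_over PA \<Longrightarrow> hh (pc w) = cl (subst w)"
proof -
  assume w: "w \<in> words_over PA"
  from some_in_class[OF w, of "bott_rels C n"]
  have "pres_eq (cox_rels n) (subst w) (subst (SOME u. u \<in> pc w))"
    by (auto simp: pc_def intro: subst_pres)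
  then show ?thesis unfolding hh_def cl_def by (rule pres_class_eqI[symmetric])
qed

lemma hh_hom: "hh \<in> hom P W"
proof (rule homI)
  fix x assume "x \<in> carrier P"
  then obtain w where "w \<in> words_over PA" "x = pc w" by (auto simp: P_carrier)
  then show "hh x \<in> carrier W" using hh_pc cl_carrier[OF subst_words] by simp
next
  fix x y assume "x \<in> carrier P" "y \<in> carrier P"
  then obtain u v where "u \<in> words_over PA" "x = pc u" "v \<in> words_over PA" "y = pc v"
    by (auto simp: P_carrier)
  then show "hh (x \<boxtimes> y) = hh x \<diamondop> hh y"
    using cl_mult[OF subst_words subst_words, of u v] hh_pc[of u] hh_pc[of v] hh_pc[of "u @ v"]
    by (simp add: pc_mult)
qed

lemma hh_group_hom: "group_hom P W hh"
  by (simp add: group_hom_def group_hom_axioms_def P_group W_group hh_hom)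

lemma hh_A: "i \<in> {1..n} \<Longrightarrow> hh (A i) = al i"
proof -
  assume i: "i \<in> {1..n}"
  have "hh (A i) = cl (subst [(n+i, True)])" unfolding A_def by (rule hh_pc) (use i in simp)
  also have "subst [(n+i, True)] = alpha_word C n (n+i)" by (simp add: sl_def)
  finally show ?thesis by (simp add: al_def)
qed

lemma sl_words: "i \<in> {1..n} \<Longrightarrow> sl (n+i, b) \<in> words_over WA"
  using al_word[of i] by (simp add: sl_def)

lemma hh_image_sub: "w \<in> words_over PA \<Longrightarrow> hh (pc w) \<in> H"
proof (induction w)
  case Nil then show ?case by (simp add: hh_pc cl_one generate.one)
next
  case (Cons x w)
  obtain i b where i: "i \<in> {1..n}" and x: "x = (n + i, b)"
    using Cons.prems by (intro that[of "fst x - n" "snd x"]) auto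
  have w: "w \<in> words_over PA" using Cons.prems by simp
  have "hh (pc (x # w)) = cl (subst (x # w))" by (rule hh_pc[OF Cons.prems])
  also have "\<dots> = cl (sl x) \<diamondop> cl (subst w)"
    unfolding subst_simps x by (rule cl_mult[symmetric, OF sl_words[OF i] subst_words[OF w]])
  also have "\<dots> = cl (sl x) \<diamondop> hh (pc w)" by (simp add: hh_pc[OF w])
  also have "\<dots> \<in> H"
  proof (rule generate.eng)
    show "cl (sl x) \<in> H" using i al_H al_inv_H by (simp add: x cl_sl)
    show "hh (pc w) \<in> H" by (rule Cons.IH[OF w])
  qed
  finally show ?case .
qed

lemma hh_image: "hh ` carrier P = H"
proof
  show "hh ` carrier P \<subseteq> H" using hh_image_sub by (auto simp: P_carrier)
next
  show "H \<subseteq> hh ` carrier P"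
  proof
    fix x assume "x \<in> H"
    then show "x \<in> hh ` carrier P"
    proof (induction rule: generate.induct)
      case one
      have "hh p1 = w1" by (rule group_hom.hom_one[OF hh_group_hom])
      then show ?case using Pg.one_closed by (intro image_eqI[of _ _ p1]) simp_all
    next
      case (incl h)
      then obtain i where i: "i \<in> {1..n}" "h = al i" by (auto simp: Hgen_eq)
      show ?case using hh_A[OF i(1)] i A_carrier[OF i(1)] by (intro image_eqI[of _ _ "A i"]) simp_all
    next
      case (inv h)
      then obtain i where i: "i \<in> {1..n}" "h = al i" by (auto simp: Hgen_eq)
      have "hh (pinv (A i)) = wi (hh (A i))"
        by (rule group_hom.hom_inv[OF hh_group_hom A_carrier[OF i(1)]])
      then show ?case using i hh_A[OF i(1)] Pg.inv_closed[OF A_carrier[OF i(1)]]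
        by (intro image_eqI[of _ _ "pinv (A i)"]) simp_all
    next
      case (eng h1 h2)
      then obtain x1 x2 where x: "x1 \<in> carrier P" "x2 \<in> carrier P" "h1 = hh x1" "h2 = hh x2"
        by blast
      have "hh (x1 \<boxtimes> x2) = hh x1 \<diamondop> hh x2" using hh_hom x(1,2) by (rule hom_mult)
      then show ?case using x Pg.m_closed[OF x(1,2)] by (intro image_eqI[of _ _ "x1 \<boxtimes> x2"]) simp_all
    qed
  qed
qed

end



context bott begin

definition F :: "nat list \<Rightarrow> (nat \<Rightarrow> int) \<Rightarrow> nat fword set" where
  "F L m = foldr (\<lambda>k acc. A k [^]\<^bsub>P\<^esub> m k \<boxtimes> acc) L p1"

lemma F_Nil [simp]: "F [] m = p1" by (simp add: F_def)
lemma F_Cons: "F (k # L) m = A k [^]\<^bsub>P\<^esub> m k \<boxtimes> F L m" by (simp add: F_def)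

lemma F_carrier [simp]: "set L \<subseteq> {1..n} \<Longrightarrow> F L m \<in> carrier P"
  by (induction L) (auto simp: F_Cons)

lemma F_append: "set L1 \<subseteq> {1..n} \<Longrightarrow> set L2 \<subseteq> {1..n} \<Longrightarrow> F (L1 @ L2) m = F L1 m \<boxtimes> F L2 m"
  by (induction L1) (auto simp: F_Cons Pg.m_assoc)

lemma F_cong: "(\<And>k. k \<in> set L \<Longrightarrow> m k = m' k) \<Longrightarrow> F L m = F L m'"
  by (induction L) (auto simp: F_Cons)

lemma F_zero: "set L \<subseteq> {1..n} \<Longrightarrow> F L (\<lambda>_. 0) = p1"
  by (induction L) (auto simp: F_Cons)

definition cjP where "cjP g x = g \<boxtimes> x \<boxtimes> pinv g"

lemma P_cancel: "g \<in> carrier P \<Longrightarrow> z \<in> carrier P \<Longrightarrow> pinv g \<boxtimes> (g \<boxtimes> z) = z"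
  by (simp flip: Pg.m_assoc)

lemma P_cancel2: "g \<in> carrier P \<Longrightarrow> z \<in> carrier P \<Longrightarrow> g \<boxtimes> (pinv g \<boxtimes> z) = z"
  by (simp flip: Pg.m_assoc)

lemma cjP_hom: "g \<in> carrier P \<Longrightarrow> cjP g \<in> hom P P"
  by (rule homI) (simp_all add: cjP_def Pg.m_assoc P_cancel)

lemma cjP_pow: "g \<in> carrier P \<Longrightarrow> x \<in> carrier P \<Longrightarrow> cjP g (x [^]\<^bsub>P\<^esub> (t::int)) = (cjP g x) [^]\<^bsub>P\<^esub> t"
  by (rule hom_int_pow[OF cjP_hom _ P_group P_group])

lemma cjP_inv: "g \<in> carrier P \<Longrightarrow> x \<in> carrier P \<Longrightarrow> cjP g (pinv x) = pinv (cjP g x)"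
  by (simp add: cjP_def Pg.inv_mult_group Pg.m_assoc)

lemma cjP_cjP: "g \<in> carrier P \<Longrightarrow> x \<in> carrier P \<Longrightarrow> cjP (pinv g) (cjP g x) = x"
  by (simp add: cjP_def Pg.m_assoc P_cancel)

lemma cjP_carrier [simp]: "g \<in> carrier P \<Longrightarrow> x \<in> carrier P \<Longrightarrow> cjP g x \<in> carrier P"
  by (simp add: cjP_def)

definition eps :: "nat \<Rightarrow> nat \<Rightarrow> int" where "eps i k = (if C i k then -1 else 1)"

lemma eps_sq: "eps i k * eps i k = 1" by (simp add: eps_def)

lemma pc4: "fst a \<in> PA \<Longrightarrow> fst b \<in> PA \<Longrightarrow> fst c \<in> PA \<Longrightarrow> fst d \<in> PA \<Longrightarrow>
  pc [a, b, c, d] = pc [a] \<boxtimes> pc [b] \<boxtimes> pc [c] \<boxtimes> pc [d]"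
  by (simp add: pc_mult)

lemma P_rel:
  assumes i: "i \<in> {1..n}" and k: "k \<in> {1..n}" and ik: "i < k"
  shows "cjP (A i) (A k) = A k [^]\<^bsub>P\<^esub> eps i k"
proof -
  have r: "x_rel C n (n+i) (n+k) \<in> bott_rels C n"
    using i k ik unfolding bott_rels_def by force
  have Ai: "A i \<in> carrier P" and Ak: "A k \<in> carrier P" using i k by auto
  have e: "pc (x_rel C n (n+i) (n+k)) = p1" by (rule pc_rel[OF r])
  show ?thesis
  proof (cases "C i k")
    case True
    have "A i \<boxtimes> pinv (A k) \<boxtimes> pinv (A i) \<boxtimes> pinv (A k) = p1"
      using e True i k by (simp add: x_rel_def pc4 pc_letter)
    then have "cjP (A i) (pinv (A k)) \<boxtimes> pinv (A k) = p1" by (simp add: cjP_def)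
    then have "pinv (cjP (A i) (A k)) = A k" using Ai Ak
      by (simp add: cjP_inv) (metis Pg.inv_closed Pg.inv_equality Pg.inv_inv cjP_carrier)
    then have "cjP (A i) (A k) = pinv (A k)" using Ai Ak by (metis Pg.inv_inv cjP_carrier)
    then show ?thesis using True Ak by (simp add: eps_def Pg.int_pow_neg)
  next
    case False
    have "A i \<boxtimes> A k \<boxtimes> pinv (A i) \<boxtimes> pinv (A k) = p1"
      using e False i k by (simp add: x_rel_def pc4 pc_letter)
    then have "cjP (A i) (A k) \<boxtimes> pinv (A k) = p1" by (simp add: cjP_def)
    then have "cjP (A i) (A k) = A k" using Ai Ak
      by (metis Pg.inv_closed Pg.inv_equality Pg.inv_inv cjP_carrier)
    then show ?thesis using False Ak by (simp add: eps_def)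
  qed
qed

lemma P_rel':
  assumes i: "i \<in> {1..n}" and k: "k \<in> {1..n}" and ik: "i < k"
  shows "cjP (pinv (A i)) (A k) = A k [^]\<^bsub>P\<^esub> eps i k"
proof -
  have Ai: "A i \<in> carrier P" and Ak: "A k \<in> carrier P" using i k by auto
  let ?c = "cjP (pinv (A i)) (A k)"
  have c: "?c \<in> carrier P" using Ai Ak by simp
  have "A k = cjP (pinv (A i)) (A k [^]\<^bsub>P\<^esub> eps i k)"
    using cjP_cjP[OF Ai Ak] P_rel[OF i k ik] by simp
  also have "\<dots> = ?c [^]\<^bsub>P\<^esub> eps i k" using Ai Ak by (simp add: cjP_pow)
  finally have "A k [^]\<^bsub>P\<^esub> eps i k = (?c [^]\<^bsub>P\<^esub> eps i k) [^]\<^bsub>P\<^esub> eps i k" by simp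
  also have "\<dots> = ?c" using c by (simp add: Pg.int_pow_pow eps_sq)
  finally show ?thesis by simp
qed

definition yy :: "bool \<Rightarrow> nat \<Rightarrow> nat fword set" where
  "yy b i = (if b then A i else pinv (A i))"

lemma yy_carrier [simp]: "i \<in> {1..n} \<Longrightarrow> yy b i \<in> carrier P" by (simp add: yy_def)

lemma yy_pow: "i \<in> {1..n} \<Longrightarrow> yy b i = A i [^]\<^bsub>P\<^esub> (if b then 1 else -1 :: int)"
  by (simp add: yy_def Pg.int_pow_neg)

lemma yy_inv: "i \<in> {1..n} \<Longrightarrow> pinv (yy b i) = yy (\<not> b) i"
  by (simp add: yy_def)

lemma pass:
  assumes i: "i \<in> {1..n}" and k: "k \<in> {1..n}" and ik: "i < k"
  shows "A k [^]\<^bsub>P\<^esub> (t::int) \<boxtimes> yy b i = yy b i \<boxtimes> A k [^]\<^bsub>P\<^esub> (eps i k * t)"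
proof -
  have y: "yy b i \<in> carrier P" and Ak: "A k \<in> carrier P" using i k by auto
  have cj: "cjP (yy (\<not> b) i) (A k) = A k [^]\<^bsub>P\<^esub> eps i k"
    using P_rel[OF i k ik] P_rel'[OF i k ik] by (cases b) (simp_all add: yy_def)
  have "A k [^]\<^bsub>P\<^esub> t \<boxtimes> yy b i = yy b i \<boxtimes> cjP (pinv (yy b i)) (A k [^]\<^bsub>P\<^esub> t)"
    using y Ak by (simp add: cjP_def Pg.m_assoc flip: Pg.m_assoc)
  also have "cjP (pinv (yy b i)) (A k [^]\<^bsub>P\<^esub> t) = A k [^]\<^bsub>P\<^esub> (eps i k * t)"
    using y Ak i by (simp add: yy_inv cjP_pow cj Pg.int_pow_pow)
  finally show ?thesis .
qed

lemma move:
  assumes "distinct L" "set L \<subseteq> {i+1..n}" "i \<in> {1..n}"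
  shows "\<exists>m'. F L m \<boxtimes> yy b i = yy b i \<boxtimes> F L m'"
  using assms
proof (induction L arbitrary: m)
  case Nil then show ?case using assms(3) by auto
next
  case (Cons k L)
  have k: "k \<in> {1..n}" "i < k" and L: "set L \<subseteq> {1..n}" and kL: "k \<notin> set L"
    using Cons.prems by auto
  have dL: "distinct L" and sL: "set L \<subseteq> {i+1..n}" using Cons.prems by auto
  obtain m' where m': "F L m \<boxtimes> yy b i = yy b i \<boxtimes> F L m'" using Cons.IH[OF dL sL Cons.prems(3)] by blast
  define m'' where "m'' = m'(k := eps i k * m k)"
  have FL: "F L m'' = F L m'" using kL by (intro F_cong) (auto simp: m''_def)
  have mk: "m'' k = eps i k * m k" by (simp add: m''_def)
  have "F (k # L) m \<boxtimes> yy b i = A k [^]\<^bsub>P\<^esub> m k \<boxtimes> (F L m \<boxtimes> yy b i)"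
    using k L Cons.prems by (simp add: F_Cons Pg.m_assoc)
  also have "\<dots> = (A k [^]\<^bsub>P\<^esub> m k \<boxtimes> yy b i) \<boxtimes> F L m'"
    using k L Cons.prems by (simp add: m' Pg.m_assoc)
  also have "\<dots> = yy b i \<boxtimes> F (k # L) m''"
    using k L Cons.prems by (simp add: pass F_Cons FL Pg.m_assoc mk)
  finally show ?case by blast
qed

lemma upt_split: "i \<in> {1..n} \<Longrightarrow> [1..<n+1] = [1..<i] @ i # [i+1..<n+1]"
proof -
  assume i: "i \<in> {1..n}"
  have "[1..<n+1] = [1..<i] @ [i..<n+1]" using i upt_add_eq_append[of 1 i "n+1-i"] by auto
  also have "[i..<n+1] = i # [Suc i..<n+1]" using i by (intro upt_conv_Cons) auto
  finally show ?thesis by simp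
qed

lemma F_split: "i \<in> {1..n} \<Longrightarrow>
  F [1..<n+1] m = F [1..<i] m \<boxtimes> (A i [^]\<^bsub>P\<^esub> m i \<boxtimes> F [i+1..<n+1] m)"
proof -
  assume i: "i \<in> {1..n}"
  have s1: "set [1..<i] \<subseteq> {1..n}" "set (i # [i+1..<n+1]) \<subseteq> {1..n}" using i by auto
  show ?thesis unfolding upt_split[OF i] F_append[OF s1] F_Cons ..
qed

lemma nf_step:
  assumes i: "i \<in> {1..n}"
  shows "\<exists>m'. F [1..<n+1] m \<boxtimes> yy b i = F [1..<n+1] m'"
proof -
  let ?e = "if b then 1 else -1 :: int"
  have ss: "set [i+1..<n+1] \<subseteq> {i+1..n}" by auto
  obtain m' where m': "F [i+1..<n+1] m \<boxtimes> yy b i = yy b i \<boxtimes> F [i+1..<n+1] m'"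
    using move[OF distinct_upt ss i, of m b] by blast
  define m'' where "m'' k = (if k < i then m k else if k = i then m i + ?e else m' k)" for k
  have s1: "set [1..<i] \<subseteq> {1..n}" "set [i+1..<n+1] \<subseteq> {1..n}" using i by auto
  have Ai: "A i \<in> carrier P" using i by simp
  have "F [1..<n+1] m \<boxtimes> yy b i = F [1..<i] m \<boxtimes> (A i [^]\<^bsub>P\<^esub> m i \<boxtimes> (F [i+1..<n+1] m \<boxtimes> yy b i))"
    using i s1 by (simp only: F_split[OF i]) (simp add: Pg.m_assoc)
  also have "\<dots> = F [1..<i] m \<boxtimes> (A i [^]\<^bsub>P\<^esub> m i \<boxtimes> (yy b i \<boxtimes> F [i+1..<n+1] m'))"
    by (simp only: m')
  also have "\<dots> = F [1..<i] m \<boxtimes> ((A i [^]\<^bsub>P\<^esub> m i \<boxtimes> A i [^]\<^bsub>P\<^esub> ?e) \<boxtimes> F [i+1..<n+1] m')"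
    using i s1 F_carrier[OF s1(2), of m'] by (simp add: yy_pow[symmetric] Pg.m_assoc del: upt_Suc)
  also have "\<dots> = F [1..<i] m'' \<boxtimes> (A i [^]\<^bsub>P\<^esub> m'' i \<boxtimes> F [i+1..<n+1] m'')"
  proof -
    have "F [1..<i] m'' = F [1..<i] m" by (intro F_cong) (auto simp: m''_def)
    moreover have "F [i+1..<n+1] m'' = F [i+1..<n+1] m'" by (intro F_cong) (auto simp: m''_def)
    ultimately show ?thesis using Ai by (simp add: m''_def Pg.int_pow_mult del: upt_Suc)
  qed
  also have "\<dots> = F [1..<n+1] m''"
    by (simp only: F_split[OF i])
  finally show ?thesis by blast
qed

lemma nf: "w \<in> words_over PA \<Longrightarrow> \<exists>m. pc w = F [1..<n+1] m"
proof (induction w rule: rev_induct)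
  case Nil
  have ss: "set [1..<n+1] \<subseteq> {1..n}" by auto
  have "pc [] = F [1..<n+1] (\<lambda>_. 0)" using F_zero[OF ss] by (simp add: pc_one)
  then show ?case by blast
next
  case (snoc x w)
  have w: "w \<in> words_over PA" and xw: "[x] \<in> words_over PA" using snoc.prems by auto
  obtain i b where i: "i \<in> {1..n}" and x: "x = (n + i, b)"
    using snoc.prems by (intro that[of "fst x - n" "snd x"]) auto
  obtain m where m: "pc w = F [1..<n+1] m" using snoc.IH[OF w] by blast
  have "pc (w @ [x]) = F [1..<n+1] m \<boxtimes> yy b i"
    using pc_mult[OF w xw] m i by (simp add: x pc_letter yy_def del: upt_Suc)
  then show ?case using nf_step[OF i] by metis
qed

end



definition dmul :: "int \<times> bool \<Rightarrow> int \<times> bool \<Rightarrow> int \<times> bool" where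
  "dmul a b = (fst a + (if snd a then - fst b else fst b), snd a \<noteq> snd b)"

lemma dmul_assoc: "dmul (dmul a b) c = dmul a (dmul b c)"
  by (cases a; cases b; cases c) (auto simp: dmul_def)

lemma dmul_id [simp]: "dmul (0, False) a = a" "dmul a (0, False) = a"
  by (cases a; simp add: dmul_def)+

lemma dmul_eq_id: "dmul a b = (0, False) \<Longrightarrow> b = (if snd a then fst a else - fst a, snd a)"
  by (cases a; cases b) (auto simp: dmul_def split: if_splits)

context bott begin

definition dl :: "nat \<Rightarrow> nat \<Rightarrow> int \<times> bool" where
  "dl a f = (if a \<le> n then (if f = a then (0, True) else (0, False))
             else (if f = a - n then (1, True) else (0, False)))"

lemma dl_sq [simp]: "dmul (dl a f) (dl a f) = (0, False)"
  by (simp add: dl_def dmul_def)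

definition ev :: "nat fword \<Rightarrow> nat \<Rightarrow> int \<times> bool" where
  "ev w f = foldr (\<lambda>x acc. dmul (dl (fst x) f) acc) w (0, False)"

lemma ev_Nil [simp]: "ev [] f = (0, False)" by (simp add: ev_def)
lemma ev_Cons: "ev (x # w) f = dmul (dl (fst x) f) (ev w f)" by (simp add: ev_def)
lemma ev_append: "ev (u @ v) f = dmul (ev u f) (ev v f)"
  by (induction u) (simp_all add: ev_Cons dmul_assoc)

lemma dl_comm_cases:
  assumes "1 \<le> i" "i < j" "j \<le> 2*n" "j \<noteq> i + n"
  shows "dl i f = (0, False) \<or> dl j f = (0, False)"
  using assms by (auto simp: dl_def)

lemma ev_rel: "r \<in> cox_rels n \<Longrightarrow> ev r f = (0, False)"
proof -
  assume "r \<in> cox_rels n"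
  then consider (sq) j where "r = [(j, True), (j, True)]"
    | (cm) i j where "r = [(i, True), (j, True), (i, True), (j, True)]" "1 \<le> i" "i < j" "j \<le> 2*n" "j \<noteq> i + n"
    unfolding cox_rels_def by blast
  then show ?thesis
  proof cases
    case sq then show ?thesis by (simp add: ev_Cons)
  next
    case cm
    then have "dl i f = (0, False) \<or> dl j f = (0, False)" by (intro dl_comm_cases)
    then show ?thesis using cm(1) by (auto simp: ev_Cons dmul_assoc[symmetric])
  qed
qed

lemma ev_inv: "pres_eq (cox_rels n) u v \<Longrightarrow> ev u = ev v"
proof (induction rule: pres_eq.induct)
  case (pe_cancel xs a b ys)
  then show ?case by (simp add: fun_eq_iff ev_append ev_Cons dmul_assoc[symmetric])
next
  case (pe_rel r xs ys)
  then show ?case by (simp add: fun_eq_iff ev_append ev_rel)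
qed auto

definition EV :: "nat fword set \<Rightarrow> nat \<Rightarrow> int \<times> bool" where
  "EV U = ev (SOME u. u \<in> U)"

lemma EV_cl: "w \<in> words_over WA \<Longrightarrow> EV (cl w) = ev w"
proof -
  assume w: "w \<in> words_over WA"
  have "pres_eq (cox_rels n) w (SOME u. u \<in> pres_class WA (cox_rels n) w)"
    using some_in_class[OF w, of "cox_rels n"] by blast
  from ev_inv[OF this] show ?thesis unfolding EV_def cl_def by simp
qed

lemma EV_mult: "x \<in> carrier W \<Longrightarrow> y \<in> carrier W \<Longrightarrow> EV (x \<diamondop> y) f = dmul (EV x f) (EV y f)"
proof -
  assume "x \<in> carrier W" "y \<in> carrier W"
  then obtain u v where "u \<in> words_over WA" "x = cl u" "v \<in> words_over WA" "y = cl v"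
    by (auto simp: W_carrier)
  then show ?thesis by (simp add: cl_mult EV_cl ev_append)
qed

lemma EV_one: "EV w1 f = (0, False)"
  using EV_cl[of "[]"] by (simp add: cl_one)

lemma EV_inv: "x \<in> carrier W \<Longrightarrow> EV (wi x) f = (if snd (EV x f) then fst (EV x f) else - fst (EV x f), snd (EV x f))"
proof -
  assume x: "x \<in> carrier W"
  have "dmul (EV x f) (EV (wi x) f) = (0, False)"
    using x EV_mult[of x "wi x" f] by (simp add: EV_one)
  then show ?thesis by (rule dmul_eq_id)
qed

lemma EV_pow_nat:
  assumes x: "x \<in> carrier W" and e: "EV x f = (c, b)" and cb: "b \<longrightarrow> c = 0"
  shows "EV (x [^]\<^bsub>W\<^esub> (k::nat)) f = (c * int k, b \<and> odd k)"
proof (induction k)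
  case 0 then show ?case by (simp add: EV_one)
next
  case (Suc k)
  have "EV (x [^]\<^bsub>W\<^esub> Suc k) f = dmul (EV (x [^]\<^bsub>W\<^esub> k) f) (EV x f)"
    using x by (simp add: EV_mult)
  also have "\<dots> = dmul (c * int k, b \<and> odd k) (c, b)" using Suc e by simp
  also have "\<dots> = (c * int (Suc k), b \<and> odd (Suc k))"
  proof (cases b)
    case True then show ?thesis using cb by (simp add: dmul_def)
  next
    case False then show ?thesis by (simp add: dmul_def distrib_left)
  qed
  finally show ?case .
qed

lemma EV_pow:
  assumes x: "x \<in> carrier W" and e: "EV x f = (c, b)" and cb: "b \<longrightarrow> c = 0"
  shows "EV (x [^]\<^bsub>W\<^esub> (t::int)) f = (c * t, b \<and> odd t)"
proof (cases "t < 0")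
  case True
  define k where "k = nat (- t)"
  have t: "t = - int k" using True by (simp add: k_def)
  have "x [^]\<^bsub>W\<^esub> t = wi (x [^]\<^bsub>W\<^esub> k)" using True int_pow_def2[of W x t] by (simp add: k_def)
  then have "EV (x [^]\<^bsub>W\<^esub> t) f = EV (wi (x [^]\<^bsub>W\<^esub> k)) f" by simp
  also have "\<dots> = (if b \<and> odd k then c * int k else - (c * int k), b \<and> odd k)"
    using x by (simp add: EV_inv EV_pow_nat[OF x e cb])
  also have "\<dots> = (c * t, b \<and> odd t)" using cb by (cases b) (auto simp: t)
  finally show ?thesis .
next
  case False
  define k where "k = nat t"
  have t: "t = int k" using False by (simp add: k_def)
  have "x [^]\<^bsub>W\<^esub> t = x [^]\<^bsub>W\<^esub> k" using False int_pow_def2[of W x t] by (simp add: k_def)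
  then show ?thesis using EV_pow_nat[OF x e cb, of k] by (simp add: t)
qed

lemma ev_sw: "set L \<subseteq> {1..n} \<Longrightarrow> distinct L \<Longrightarrow> ev (sw L) f = (0, f \<in> set L)"
  by (induction L) (auto simp: sw_simps ev_Cons dl_def dmul_def)

lemma EV_al: "k \<in> {1..n} \<Longrightarrow>
  EV (al k) f = (if f = k then (1, False) else (0, f \<in> set (sig k)))"
proof -
  assume k: "k \<in> {1..n}"
  have sg: "set (sig k) \<subseteq> {1..n}" "distinct (sig k)" using sig_set[of k] by (auto simp: sig_def)
  have kn: "k \<notin> set (sig k)" using sig_set[of k] by auto
  have "EV (al k) f = ev ([(n+k, True), (k, True)] @ sw (sig k)) f"
    unfolding al_def using al_word[OF k] by (simp add: EV_cl alpha_eq)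
  then show ?thesis using k kn by (simp add: ev_append ev_Cons ev_sw[OF sg] dl_def dmul_def)
qed

definition G :: "nat list \<Rightarrow> (nat \<Rightarrow> int) \<Rightarrow> nat fword set" where
  "G L m = foldr (\<lambda>k acc. al k [^]\<^bsub>W\<^esub> m k \<diamondop> acc) L w1"

lemma G_Cons: "G (k # L) m = al k [^]\<^bsub>W\<^esub> m k \<diamondop> G L m" by (simp add: G_def)

lemma G_carrier: "set L \<subseteq> {1..n} \<Longrightarrow> G L m \<in> carrier W"
  by (induction L) (auto simp: G_def)

lemma hh_F: "set L \<subseteq> {1..n} \<Longrightarrow> hh (F L m) = G L m"
proof (induction L)
  case Nil then show ?case using group_hom.hom_one[OF hh_group_hom] by (simp add: G_def)
next
  case (Cons k L)
  have k: "k \<in> {1..n}" and L: "set L \<subseteq> {1..n}" using Cons.prems by auto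
  have "hh (F (k # L) m) = hh (A k [^]\<^bsub>P\<^esub> m k) \<diamondop> hh (F L m)"
    using k L by (simp add: F_Cons hom_mult[OF hh_hom])
  also have "hh (A k [^]\<^bsub>P\<^esub> m k) = al k [^]\<^bsub>W\<^esub> m k"
    using k by (simp add: hom_int_pow[OF hh_hom _ P_group W_group] hh_A)
  finally show ?case using Cons.IH[OF L] by (simp add: G_Cons)
qed

lemma EV_al_pow_low: "k \<in> {1..n} \<Longrightarrow> f \<noteq> k \<Longrightarrow> \<exists>b. EV (al k [^]\<^bsub>W\<^esub> (t::int)) f = (0, b)"
  using EV_pow[OF al_carrier, of k f 0 "f \<in> set (sig k)" t] by (simp add: EV_al)

lemma EVG_high: "set L \<subseteq> {1..n} \<Longrightarrow> (\<forall>k\<in>set L. f < k) \<Longrightarrow> EV (G L m) f = (0, False)"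
proof (induction L)
  case Nil then show ?case by (simp add: G_def EV_one)
next
  case (Cons k L)
  have k: "k \<in> {1..n}" "f < k" and L: "set L \<subseteq> {1..n}" using Cons.prems by auto
  have fs: "f \<notin> set (sig k)" using sig_set[of k] k by auto
  have "EV (al k [^]\<^bsub>W\<^esub> m k) f = (0, False)"
    using EV_pow[OF al_carrier, of k f 0 False "m k"] k fs by (simp add: EV_al)
  then show ?case using Cons k L by (simp add: G_Cons EV_mult G_carrier)
qed

lemma EVG_main:
  "sorted_wrt (<) L \<Longrightarrow> set L \<subseteq> {1..n} \<Longrightarrow> f \<in> set L \<Longrightarrow>
   fst (EV (G L m) f) = m f \<or> fst (EV (G L m) f) = - m f"
proof (induction L)
  case Nil then show ?case by simp
next
  case (Cons k L)
  have k: "k \<in> {1..n}" and L: "set L \<subseteq> {1..n}" and srt: "sorted_wrt (<) L"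
    and gt: "\<forall>j\<in>set L. k < j" using Cons.prems by auto
  show ?case
  proof (cases "f = k")
    case True
    have "EV (al k [^]\<^bsub>W\<^esub> m k) f = (m k, False)"
      using EV_pow[OF al_carrier, of k f 1 False "m k"] k True by (simp add: EV_al)
    moreover have "EV (G L m) f = (0, False)" using EVG_high[OF L] gt True by auto
    ultimately show ?thesis using True k L by (simp add: G_Cons EV_mult G_carrier)
  next
    case False
    then have fL: "f \<in> set L" using Cons.prems by auto
    obtain b where b: "EV (al k [^]\<^bsub>W\<^esub> m k) f = (0, b)" using EV_al_pow_low[OF k False] by blast
    have IH: "fst (EV (G L m) f) = m f \<or> fst (EV (G L m) f) = - m f" using Cons.IH[OF srt L fL] .
    show ?thesis using k L b IH by (auto simp: G_Cons EV_mult G_carrier dmul_def)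
  qed
qed

lemma hh_inj: "inj_on hh (carrier P)"
proof -
  have "kernel P W hh = {p1}"
  proof
    show "{p1} \<subseteq> kernel P W hh"
      using group_hom.hom_one[OF hh_group_hom] by (auto simp: kernel_def)
  next
    show "kernel P W hh \<subseteq> {p1}"
    proof
      fix x assume x: "x \<in> kernel P W hh"
      then have xc: "x \<in> carrier P" and hx: "hh x = w1" by (auto simp: kernel_def)
      obtain w where w: "w \<in> words_over PA" "x = pc w" using xc by (auto simp: P_carrier)
      obtain m where m: "x = F [1..<n+1] m" using nf[OF w(1)] w(2) by blast
      have ss: "set [1..<n+1] \<subseteq> {1..n}" by auto
      have G1: "G [1..<n+1] m = w1" using hx m hh_F[OF ss] by simp
      have "m f = 0" if f: "f \<in> {1..n}" for f
      proof -
        have "f \<in> set [1..<n+1]" using f by auto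
        then have "fst (EV (G [1..<n+1] m) f) = m f \<or> fst (EV (G [1..<n+1] m) f) = - m f"
          by (intro EVG_main[OF _ ss]) (rule sorted_wrt_upt)
        then show ?thesis using G1 EV_one by auto
      qed
      then have "F [1..<n+1] m = F [1..<n+1] (\<lambda>_. 0)" by (intro F_cong) auto
      then show "x \<in> {p1}" using m F_zero[OF ss] by simp
    qed
  qed
  then show ?thesis using group_hom.inj_iff_trivial_ker[OF hh_group_hom] by simp
qed

lemma main:
  "generate W Hgen = K \<and>
   (\<exists>h. h \<in> iso P (W\<lparr>carrier := K\<rparr>) \<and>
        (\<forall>j\<in>{n+1..2*n}. h (pc [(j, True)]) = cl (alpha_word C n j)))"
proof (intro conjI exI[of _ hh])
  show "generate W Hgen = K" by (rule partA)
  show "hh \<in> iso P (W\<lparr>carrier := K\<rparr>)"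
  proof -
    have "hh \<in> hom P (W\<lparr>carrier := K\<rparr>)"
      using hh_hom hh_image partA unfolding hom_def by auto
    moreover have "bij_betw hh (carrier P) K"
      using hh_inj hh_image partA by (simp add: bij_betw_def)
    ultimately show ?thesis by (simp add: iso_def)
  qed
  show "\<forall>j\<in>{n+1..2*n}. hh (pc [(j, True)]) = cl (alpha_word C n j)"
  proof
    fix j assume j: "j \<in> {n+1..2*n}"
    then have "[(j, True)] \<in> words_over PA" by simp
    then show "hh (pc [(j, True)]) = cl (alpha_word C n j)" by (simp add: hh_pc sl_def)
  qed
qed

end

theorem theorem2p1:
  fixes n :: nat and C :: "nat \<Rightarrow> nat \<Rightarrow> bool"
  assumes "n \<ge> 1" and "bott_matrix n C"
  shows "generate (cox_W n)
            (pres_class {1..2*n} (cox_rels n) ` alpha_word C n ` {n+1..2*n})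
           = kernel (cox_W n) (Z2n n) (phi C n)
       \<and> (\<exists>h. h \<in> iso (pres_group {n+1..2*n} (bott_rels C n))
                        ((cox_W n)\<lparr>carrier := kernel (cox_W n) (Z2n n) (phi C n)\<rparr>)
             \<and> (\<forall>j\<in>{n+1..2*n}.
                  h (pres_class {n+1..2*n} (bott_rels C n) [(j, True)])
                  = pres_class {1..2*n} (cox_rels n) (alpha_word C n j)))"
proof -
  interpret bott n C using assms by unfold_locales
  show ?thesis using main unfolding Hgen_def PA_def pc_def cl_def .
qed

end
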